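(* Let $\Omega$ be a domain in $\mathbb C^n$. Suppose $f=u+iv$ is holomorphic on $\Omega$ (with $u,v$ real-valued), $|u|\le 1$ on $\Omega$, and $v(z_0)=0$ for some $z_0\in\Omega$. Then for any $\alpha>1$ there exists a constant $C_\alpha>0$ such that $$\int_{\partial\Omega_t}\frac{\exp\left(\frac{\pi}{2}|f|\right)}{(1+|f|)^\alpha}\,d\omega_{z_0,t}\le C_\alpha$$ holds for every $t$ and for any exhaustion $\{\Omega_t\}$ of $\Omega$ with $z_0\in\Omega_t$.
   Context: An exhaustion $\{\Omega_t\}$ of $\Omega$ is an increasing family of relatively compact subdomains of $\Omega$ whose union is $\Omega$. For such $\Omega_t\ni z_0$, $d\omega_{z_0,t}$ denotes the harmonic measure of $\Omega_t$ relative to $z_0$ (harmonicity with respect to the Euclidean Laplacian on $\mathbb C^n\cong\mathbb R^{2n}$). *)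

theory Defs
  imports "HOL-Analysis.Analysis"
begin

text \<open>C^n is modelled as complex^'n (a Euclidean space of real dimension 2n);
  Lebesgue measure lborel on it is Lebesgue measure on R^(2n).\<close>

definition holomorphic_several :: "(complex^'n \<Rightarrow> complex) \<Rightarrow> (complex^'n) set \<Rightarrow> bool" where
  "holomorphic_several f S \<longleftrightarrow>
     (\<forall>z\<in>S. \<exists>L. (f has_derivative L) (at z) \<and> (\<forall>c w. L (c *s w) = c * L w))"

definition domain :: "'a::topological_space set \<Rightarrow> bool" where
  "domain D \<longleftrightarrow> open D \<and> connected D \<and> D \<noteq> {}"

definition rel_compact_subdomain :: "'a::metric_space set \<Rightarrow> 'a set \<Rightarrow> bool" where
  "rel_compact_subdomain D \<Omega> \<longleftrightarrow> domain D \<and> compact (closure D) \<and> closure D \<subseteq> \<Omega>"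

definition exhaustion :: "(real \<Rightarrow> 'a::metric_space set) \<Rightarrow> 'a set \<Rightarrow> bool" where
  "exhaustion \<Omega>t \<Omega> \<longleftrightarrow>
     (\<forall>t. rel_compact_subdomain (\<Omega>t t) \<Omega>) \<and> (\<forall>s t. s \<le> t \<longrightarrow> \<Omega>t s \<subseteq> \<Omega>t t) \<and>
     (\<Union>t. \<Omega>t t) = \<Omega>"

definition cont_superharmonic_on :: "'a::euclidean_space set \<Rightarrow> ('a \<Rightarrow> real) \<Rightarrow> bool" where
  "cont_superharmonic_on D s \<longleftrightarrow> continuous_on D s \<and>
     (\<forall>x r. r > 0 \<longrightarrow> cball x r \<subseteq> D \<longrightarrow>
        s x \<ge> (LINT y:cball x r|lborel. s y) / measure lborel (cball x r))"

definition perron_upper_class :: "'a::euclidean_space set \<Rightarrow> ('a \<Rightarrow> real) \<Rightarrow> ('a \<Rightarrow> real) set" where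
  "perron_upper_class D \<phi> = {s. cont_superharmonic_on D s \<and> bdd_below (s ` D) \<and>
     (\<forall>\<zeta>\<in>frontier D. \<forall>e>0. \<exists>d>0. \<forall>z\<in>D. dist z \<zeta> < d \<longrightarrow> s z > \<phi> \<zeta> - e)}"

definition perron_solution :: "'a::euclidean_space set \<Rightarrow> ('a \<Rightarrow> real) \<Rightarrow> 'a \<Rightarrow> real" where
  "perron_solution D \<phi> x = (INF s\<in>perron_upper_class D \<phi>. s x)"

definition harmonic_measure :: "'a::euclidean_space set \<Rightarrow> 'a \<Rightarrow> 'a measure \<Rightarrow> bool" where
  "harmonic_measure D x0 \<omega> \<longleftrightarrow>
     sets \<omega> = sets (restrict_space borel (frontier D)) \<and> finite_measure \<omega> \<and>
     (\<forall>\<phi>. continuous_on (frontier D) \<phi> \<longrightarrow> (\<integral>y. \<phi> y \<partial>\<omega>) = perron_solution D \<phi> x0)"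

end

theory Submission
  imports Defs "HOL-Complex_Analysis.Complex_Analysis" "HOL-Library.Numeral_Type"
begin
lemma basis_map_lborel:
  fixes T :: "'a::euclidean_space \<Rightarrow> 'b::euclidean_space" and S :: "'b \<Rightarrow> 'a"
  assumes lT: "linear T" and lS: "linear S" and ST: "\<And>x. S (T x) = x" and TS: "\<And>y. T (S y) = y"
    and bij: "bij_betw T Basis Basis" and inn: "\<And>x y. T x \<bullet> T y = x \<bullet> y"
  shows "distr lborel borel T = lborel"
proof (rule lborel_eqI[symmetric])
  have mT: "T \<in> borel_measurable borel"
    using lT by (intro borel_measurable_continuous_onI linear_continuous_on linear_conv_bounded_linear[THEN iffD1])
  show "sets (distr lborel borel T) = sets borel" by simp
  fix l u :: 'b assume le: "\<And>b. b \<in> Basis \<Longrightarrow> l \<bullet> b \<le> u \<bullet> b"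
  have yT: "y \<bullet> T a = S y \<bullet> a" for y a
    by (metis TS inn)
  have pre: "T -` box l u = box (S l) (S u)"
  proof (rule set_eqI)
    fix x
    have eqB: "T ` Basis = Basis" using bij by (simp add: bij_betw_def)
    have "(T x \<in> box l u) = (\<forall>b\<in>T ` Basis. l \<bullet> b < T x \<bullet> b \<and> T x \<bullet> b < u \<bullet> b)"
      unfolding mem_box eqB by simp
    also have "\<dots> = (\<forall>a\<in>Basis. S l \<bullet> a < x \<bullet> a \<and> x \<bullet> a < S u \<bullet> a)"
      by (simp add: yT ST)
    finally show "x \<in> T -` box l u \<longleftrightarrow> x \<in> box (S l) (S u)" by (simp add: mem_box)
  qed
  have "emeasure (distr lborel borel T) (box l u) = emeasure lborel (box (S l) (S u))"
    using mT by (simp add: emeasure_distr pre)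
  also have "\<dots> = (\<Prod>a\<in>Basis. (S u - S l) \<bullet> a)"
  proof -
    have "(S u - S l) \<bullet> a = (u - l) \<bullet> T a" for a
      by (metis TS inn lS linear_diff)
    moreover have "a \<in> Basis \<Longrightarrow> S l \<bullet> a \<le> S u \<bullet> a" for a
      using le[of "T a"] bij by (metis TS bij_betw_apply inn)
    ultimately show ?thesis by (simp add: emeasure_lborel_box_eq inner_diff_left)
  qed
  also have "\<dots> = (\<Prod>a\<in>Basis. (u - l) \<bullet> T a)"
    by (metis TS inn lS linear_diff)
  also have "\<dots> = (\<Prod>b\<in>Basis. (u - l) \<bullet> b)"
    using prod.reindex_bij_betw[OF bij, of "\<lambda>b. (u - l) \<bullet> b"] by simp
  finally show "emeasure (distr lborel borel T) (box l u) = (\<Prod>b\<in>Basis. (u - l) \<bullet> b)" .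
qed

lemma orth_lborel:
  fixes Q Q' :: "real^'m::{finite,wellorder} \<Rightarrow> real^'m::_"
  assumes oQ: "orthogonal_transformation Q" and oQ': "orthogonal_transformation Q'"
    and QQ': "\<And>v. Q (Q' v) = v" and Q'Q: "\<And>v. Q' (Q v) = v"
  shows "distr lborel borel Q = lborel"
proof (rule lborel_eqI[symmetric])
  have cQ: "continuous_on UNIV Q"
    using oQ by (intro linear_continuous_on linear_conv_bounded_linear[THEN iffD1] orthogonal_transformation_linear)
  have mQ: "Q \<in> borel_measurable borel"
    using cQ by (intro borel_measurable_continuous_onI)
  show "sets (distr lborel borel Q) = sets borel" by simp
  fix l u :: "real^'m::{finite,wellorder}" assume le: "\<And>b. b \<in> Basis \<Longrightarrow> l \<bullet> b \<le> u \<bullet> b"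
  have pre: "Q -` box l u = Q' ` box l u"
  proof (rule set_eqI)
    fix v
    show "v \<in> Q -` box l u \<longleftrightarrow> v \<in> Q' ` box l u"
    proof
      assume "v \<in> Q -` box l u"
      then have "Q v \<in> box l u" by simp
      then show "v \<in> Q' ` box l u" by (intro image_eqI[of v Q' "Q v"]) (simp_all add: Q'Q)
    next
      assume "v \<in> Q' ` box l u"
      then obtain w where "w \<in> box l u" "v = Q' w" by blast
      then show "v \<in> Q -` box l u" by (simp add: QQ')
    qed
  qed
  have op: "open (Q -` box l u)"
    using cQ by (intro open_vimage open_box)
  then have Asets: "Q -` box l u \<in> sets lborel" by simp
  have bdd: "bounded (Q -` box l u)"
    unfolding pre
    by (intro bounded_linear_image bounded_box linear_conv_bounded_linear[THEN iffD1] orthogonal_transformation_linear oQ')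
  have lbox: "box l u \<in> lmeasurable" by simp
  have "emeasure (distr lborel borel Q) (box l u) = emeasure lborel (Q -` box l u)"
    using mQ by (simp add: emeasure_distr)
  also have "\<dots> = ennreal (measure lborel (Q -` box l u))"
    by (rule emeasure_eq_ennreal_measure) (use emeasure_bounded_finite[OF bdd] in simp)
  also have "measure lborel (Q -` box l u) = measure lebesgue (Q' ` box l u)"
    using Asets pre by simp
  also have "\<dots> = measure lebesgue (box l u)"
    by (rule measure_orthogonal_image[OF oQ' lbox])
  also have "\<dots> = measure lborel (box l u)" by simp
  also have "ennreal \<dots> = emeasure lborel (box l u)"
    by (rule emeasure_eq_ennreal_measure[symmetric]) (use emeasure_bounded_finite[OF bounded_box, of l u] in simp)
  also have "\<dots> = (\<Prod>b\<in>Basis. (u - l) \<bullet> b)"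
    using le by (simp add: emeasure_lborel_box_eq)
  finally show "emeasure (distr lborel borel Q) (box l u) = (\<Prod>b\<in>Basis. (u - l) \<bullet> b)" .
qed

lemma rot_lborel:
  fixes \<zeta> :: complex
  assumes z1: "cmod \<zeta> = 1"
  shows "distr lborel borel (\<lambda>z::complex^'n. \<zeta> *s z) = lborel"
proof -
  have "card (UNIV :: ('n \<times> bool) set) = card (UNIV :: 'n bit0 set)"
    by (simp add: card_UNIV_bool)
  then obtain \<beta> :: "'n \<times> bool \<Rightarrow> 'n bit0" where bb: "bij_betw \<beta> UNIV UNIV"
    using finite_same_card_bij[of "UNIV :: ('n \<times> bool) set" "UNIV :: 'n bit0 set"] by auto
  have bij\<beta>: "bij \<beta>" using bb by simp
  have ib1[simp]: "inv \<beta> (\<beta> p) = p" for p using bij\<beta> by (simp add: bij_is_inj)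
  have ib2[simp]: "\<beta> (inv \<beta> k) = k" for k using bij\<beta> by (simp add: bij_is_surj surj_f_inv_f)
  define \<Phi> :: "complex^'n \<Rightarrow> real^'n bit0" where
    "\<Phi> z = (\<chi> k. case inv \<beta> k of (i, b) \<Rightarrow> if b then Re (z$i) else Im (z$i))" for z
  define \<Psi> :: "real^'n bit0 \<Rightarrow> complex^'n" where
    "\<Psi> v = (\<chi> i. Complex (v $ \<beta> (i, True)) (v $ \<beta> (i, False)))" for v
  have \<Phi>comp: "\<Phi> z $ \<beta> (i, b) = (if b then Re (z$i) else Im (z$i))" for z i b
    by (simp add: \<Phi>_def)
  have \<Psi>\<Phi>[simp]: "\<Psi> (\<Phi> z) = z" for z
    by (simp add: \<Psi>_def \<Phi>comp vec_eq_iff complex_eq_iff)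
  have \<Phi>\<Psi>[simp]: "\<Phi> (\<Psi> v) = v" for v
  proof -
    have "\<Phi> (\<Psi> v) $ k = v $ k" for k
    proof -
      obtain i b where ik: "inv \<beta> k = (i, b)" by (cases "inv \<beta> k") auto
      then have k: "k = \<beta> (i, b)" by (metis ib2)
      show ?thesis unfolding k \<Phi>comp by (cases b) (simp_all add: \<Psi>_def)
    qed
    then show ?thesis by (simp add: vec_eq_iff)
  qed
  have lin\<Phi>: "linear \<Phi>"
    by (rule linearI) (auto simp: \<Phi>_def vec_eq_iff split: prod.splits)
  have lin\<Psi>: "linear \<Psi>"
    by (rule linearI) (auto simp: \<Psi>_def vec_eq_iff complex_eq_iff)
  have inn\<Phi>: "\<Phi> x \<bullet> \<Phi> y = x \<bullet> y" for x y
  proof -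
    have "\<Phi> x \<bullet> \<Phi> y = (\<Sum>k\<in>UNIV. \<Phi> x $ k * \<Phi> y $ k)"
      by (simp add: inner_vec_def)
    also have "\<dots> = (\<Sum>p\<in>UNIV. \<Phi> x $ \<beta> p * \<Phi> y $ \<beta> p)"
      using sum.reindex_bij_betw[OF bb, of "\<lambda>k. \<Phi> x $ k * \<Phi> y $ k"] by simp
    also have "\<dots> = (\<Sum>i\<in>UNIV. \<Sum>b\<in>UNIV. \<Phi> x $ \<beta> (i,b) * \<Phi> y $ \<beta> (i,b))"
      by (simp add: sum.cartesian_product UNIV_Times_UNIV[symmetric] del: UNIV_Times_UNIV)
    also have "\<dots> = (\<Sum>i\<in>UNIV. x $ i \<bullet> y $ i)"
      by (simp add: \<Phi>comp UNIV_bool inner_complex_def add.commute)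
    finally show ?thesis by (simp add: inner_vec_def)
  qed
  have inn\<Psi>: "\<Psi> x \<bullet> \<Psi> y = x \<bullet> y" for x y
    by (metis \<Phi>\<Psi> inn\<Phi>)
  have ax1: "\<Phi> (axis i 1) = axis (\<beta> (i, True)) 1" for i
  proof -
    have "\<Phi> (axis i 1) $ k = axis (\<beta> (i, True)) 1 $ k" for k
    proof -
      obtain j b where ik: "inv \<beta> k = (j, b)" by (cases "inv \<beta> k") auto
      then have k: "k = \<beta> (j, b)" by (metis ib2)
      show ?thesis unfolding k \<Phi>comp
        by (cases b) (auto simp: axis_def bij_is_inj[OF bij\<beta>, THEN inj_eq])
    qed
    then show ?thesis by (simp add: vec_eq_iff)
  qed
  have ax2: "\<Phi> (axis i \<i>) = axis (\<beta> (i, False)) 1" for i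
  proof -
    have "\<Phi> (axis i \<i>) $ k = axis (\<beta> (i, False)) 1 $ k" for k
    proof -
      obtain j b where ik: "inv \<beta> k = (j, b)" by (cases "inv \<beta> k") auto
      then have k: "k = \<beta> (j, b)" by (metis ib2)
      show ?thesis unfolding k \<Phi>comp
        by (cases b) (auto simp: axis_def bij_is_inj[OF bij\<beta>, THEN inj_eq])
    qed
    then show ?thesis by (simp add: vec_eq_iff)
  qed
  have BC: "(Basis :: (complex^'n) set) = (\<Union>i. {axis i 1, axis i \<i>})"
    by (auto simp: Basis_vec_def Basis_complex_def)
  have BR: "(Basis :: (real^'n bit0) set) = (\<Union>k. {axis k 1})"
    by (auto simp: Basis_vec_def)
  have \<Phi>B: "\<Phi> ` Basis \<subseteq> Basis"
    unfolding BC BR using ax1 ax2 by auto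
  have \<Psi>B: "\<Psi> ` Basis \<subseteq> Basis"
  proof
    fix a assume "a \<in> \<Psi> ` (Basis :: (real^'n bit0) set)"
    then obtain k where a: "a = \<Psi> (axis k 1)" unfolding BR by auto
    obtain j b where ik: "inv \<beta> k = (j, b)" by (cases "inv \<beta> k") auto
    then have k: "k = \<beta> (j, b)" by (metis ib2)
    show "a \<in> Basis"
    proof (cases b)
      case True
      then have "a = axis j 1" using a k ax1 by (metis \<Psi>\<Phi>)
      then show ?thesis unfolding BC by auto
    next
      case False
      then have "a = axis j \<i>" using a k ax2 by (metis \<Psi>\<Phi>)
      then show ?thesis unfolding BC by auto
    qed
  qed
  have bij\<Phi>: "bij_betw \<Phi> Basis Basis"
    by (rule bij_betw_byWitness[where f'=\<Psi>]) (use \<Phi>B \<Psi>B in auto)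
  have bij\<Psi>: "bij_betw \<Psi> Basis Basis"
    by (rule bij_betw_byWitness[where f'=\<Phi>]) (use \<Phi>B \<Psi>B in auto)
  have d\<Phi>: "distr lborel borel \<Phi> = lborel"
    by (rule basis_map_lborel[OF lin\<Phi> lin\<Psi> \<Psi>\<Phi> \<Phi>\<Psi> bij\<Phi> inn\<Phi>])
  have d\<Psi>: "distr lborel borel \<Psi> = lborel"
    by (rule basis_map_lborel[OF lin\<Psi> lin\<Phi> \<Phi>\<Psi> \<Psi>\<Phi> bij\<Psi> inn\<Psi>])
  have linS: "linear (\<lambda>z::complex^'n. c *s z)" for c
    by (rule linearI) (auto simp: vec_eq_iff scaleR_conv_of_real algebra_simps)
  have normS: "norm (c *s z) = cmod c * norm z" for c and z :: "complex^'n"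
  proof -
    have "norm (c *s z) = L2_set (\<lambda>i. cmod c * norm (z $ i)) UNIV"
      by (simp add: norm_vec_def norm_mult)
    also have "\<dots> = cmod c * norm z"
      by (simp add: L2_set_right_distrib norm_vec_def)
    finally show ?thesis .
  qed
  have norm\<Phi>: "norm (\<Phi> z) = norm z" for z
    by (simp add: norm_eq_sqrt_inner inn\<Phi>)
  have norm\<Psi>: "norm (\<Psi> z) = norm z" for z
    by (simp add: norm_eq_sqrt_inner inn\<Psi>)
  define Q where "Q v = \<Phi> (\<zeta> *s \<Psi> v)" for v
  define Q' where "Q' v = \<Phi> (cnj \<zeta> *s \<Psi> v)" for v
  have cz: "cnj \<zeta> * \<zeta> = 1"
    using z1 by (metis complex_norm_square mult.commute of_real_1 power_one)
  have oQ: "orthogonal_transformation Q"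
    unfolding orthogonal_transformation Q_def
    using z1 by (auto simp: norm\<Phi> norm\<Psi> normS intro!: linear_compose[OF lin\<Psi>, unfolded o_def] linear_compose[OF _ lin\<Phi>, unfolded o_def] linS)
  have oQ': "orthogonal_transformation Q'"
    unfolding orthogonal_transformation Q'_def
    using z1 by (auto simp: norm\<Phi> norm\<Psi> normS intro!: linear_compose[OF lin\<Psi>, unfolded o_def] linear_compose[OF _ lin\<Phi>, unfolded o_def] linS)
  have QQ': "Q (Q' v) = v" for v
    by (simp add: Q_def Q'_def vec_eq_iff mult.assoc[symmetric] cz mult.commute[of \<zeta>])
  have Q'Q: "Q' (Q v) = v" for v
    by (simp add: Q_def Q'_def vec_eq_iff mult.assoc[symmetric] cz)
  have dQ: "distr lborel borel Q = lborel"
    by (rule orth_lborel[OF oQ oQ' QQ' Q'Q])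
  have meas: "f \<in> borel_measurable borel" if "linear f" for f :: "'x::euclidean_space \<Rightarrow> 'y::euclidean_space"
    using that by (intro borel_measurable_continuous_onI linear_continuous_on linear_conv_bounded_linear[THEN iffD1])
  have eq: "(\<lambda>z::complex^'n. \<zeta> *s z) = \<Psi> \<circ> (Q \<circ> \<Phi>)"
    by (rule ext) (simp add: Q_def)
  have "distr lborel borel (\<Psi> \<circ> (Q \<circ> \<Phi>)) = distr (distr (distr lborel borel \<Phi>) borel Q) borel \<Psi>"
    using meas[OF lin\<Phi>] meas[OF lin\<Psi>] meas[OF orthogonal_transformation_linear[OF oQ]]
    by (simp add: distr_distr measurable_comp)
  also have "\<dots> = lborel" by (simp add: d\<Phi> dQ d\<Psi>)
  finally have "distr lborel borel (\<Psi> \<circ> (Q \<circ> \<Phi>)) = lborel" .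
  then show ?thesis by (simp only: eq)
qed

lemma trans_lborel: "distr lborel borel (\<lambda>z::'a::euclidean_space. a + z) = lborel"
proof -
  have "lborel = density (distr lborel borel (\<lambda>z::'a. a + 1 *\<^sub>R z)) (\<lambda>_. \<bar>1::real\<bar> ^ DIM('a))"
    by (rule lborel_affine) simp
  then show ?thesis by (simp add: density_1)
qed

lemma rotc_lborel:
  fixes \<zeta> :: complex and x :: "complex^'n"
  assumes "cmod \<zeta> = 1"
  shows "distr lborel borel (\<lambda>y. x + \<zeta> *s (y - x)) = lborel"
proof -
  have meas: "f \<in> borel_measurable borel" if "continuous_on UNIV f" for f :: "complex^'n \<Rightarrow> complex^'n"
    using that by (intro borel_measurable_continuous_onI)
  have c1: "continuous_on UNIV (\<lambda>z::complex^'n. \<zeta> *s z)"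
    by (rule linear_continuous_on, rule linear_conv_bounded_linear[THEN iffD1])
       (rule linearI, auto simp: vec_eq_iff scaleR_conv_of_real algebra_simps)
  have c2: "continuous_on UNIV (\<lambda>z::complex^'n. a + z)" for a
    by (intro continuous_intros)
  have eq: "(\<lambda>y. x + \<zeta> *s (y - x)) = (\<lambda>z. x + z) \<circ> ((\<lambda>z. \<zeta> *s z) \<circ> (\<lambda>z. (-x) + z))"
    by (rule ext) simp
  have "distr lborel borel ((\<lambda>z. x + z) \<circ> ((\<lambda>z. \<zeta> *s z) \<circ> (\<lambda>z. (-x) + z)))
      = distr (distr (distr lborel borel (\<lambda>z. (-x) + z)) borel (\<lambda>z. \<zeta> *s z)) borel (\<lambda>z. x + z)"
    using meas[OF c1] meas[OF c2[of x]] meas[OF c2[of "-x"]]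
    by (simp add: distr_distr measurable_comp)
  also have "\<dots> = lborel"
  proof -
    have t2: "distr lborel borel (\<lambda>z::complex^'n. z - x) = lborel"
      using trans_lborel[of "-x"] by simp
    show ?thesis by (simp add: t2 trans_lborel rot_lborel[OF assms])
  qed
  finally have "distr lborel borel ((\<lambda>z. x + z) \<circ> ((\<lambda>z. \<zeta> *s z) \<circ> (\<lambda>z. (-x) + z))) = lborel" .
  then show ?thesis by (simp only: eq)
qed

lemma norm_smult_vec: "norm (c *s z) = cmod c * norm (z :: complex^'n)"
proof -
  have "norm (c *s z) = L2_set (\<lambda>i. cmod c * norm (z $ i)) UNIV"
    by (simp add: norm_vec_def norm_mult)
  also have "\<dots> = cmod c * norm z"
    by (simp add: L2_set_right_distrib norm_vec_def)
  finally show ?thesis .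
qed

lemma cont_smult_vec[continuous_intros]:
  fixes g :: "'a::topological_space \<Rightarrow> complex" and h :: "'a \<Rightarrow> complex^'n"
  assumes "continuous_on S g" "continuous_on S h"
  shows "continuous_on S (\<lambda>t. g t *s h t)"
proof -
  have "(\<lambda>t. g t *s h t) = (\<lambda>t. \<chi> i. g t * h t $ i)"
    by (auto simp: vec_eq_iff)
  then show ?thesis using assms by (simp only:) (intro continuous_on_vec_lambda continuous_intros)
qed

lemma circle_mean:
  fixes g :: "complex \<Rightarrow> complex"
  assumes W: "open W" "cball 0 1 \<subseteq> W" and hol: "g holomorphic_on W"
  shows "(LINT t:{0..1}|lborel. Re (g (exp (2 * of_real pi * \<i> * of_real t)))) = Re (g 0)"
proof -
  have cg: "continuous_on W g" using hol holomorphic_on_imp_continuous_on by blast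
  have "((\<lambda>u. g u / (u - 0)) has_contour_integral (2 * of_real pi * \<i> * g 0)) (circlepath 0 1)"
  proof (rule Cauchy_integral_circlepath)
    show "g holomorphic_on ball 0 1"
      using hol W(2) ball_subset_cball by (meson holomorphic_on_subset subset_trans)
    show "continuous_on (cball 0 1) g" using cg W(2) continuous_on_subset by blast
  qed simp
  then have h1: "((\<lambda>t. g (circlepath 0 1 t) / (circlepath 0 1 t - 0) * vector_derivative (circlepath 0 1) (at t))
        has_integral (2 * of_real pi * \<i> * g 0)) {0..1}"
    by (simp only: has_contour_integral)
  have pt: "g (circlepath 0 1 t) / (circlepath 0 1 t - 0) * vector_derivative (circlepath 0 1) (at t)
      = (2 * of_real pi * \<i>) * g (exp (2 * of_real pi * \<i> * of_real t))" for t
  proof -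
    have ne: "exp (2 * of_real pi * \<i> * of_real t) \<noteq> 0" by simp
    have "circlepath 0 1 t = exp (2 * of_real pi * \<i> * of_real t)" by (simp add: circlepath)
    then show ?thesis using ne by (simp add: vector_derivative_circlepath)
  qed
  define c :: complex where "c = 2 * of_real pi * \<i>"
  define G where "G t = g (exp (2 * of_real pi * \<i> * of_real t))" for t :: real
  have c0: "c \<noteq> 0" by (simp add: c_def)
  have "((\<lambda>t. c * G t) has_integral c * g 0) {0..1}"
    using h1 unfolding c_def G_def by (simp only: pt)
  then have "((\<lambda>t. inverse c * (c * G t)) has_integral inverse c * (c * g 0)) {0..1}"
    by (rule has_integral_mult_right)
  then have "(G has_integral g 0) {0..1}"
    by (simp only: mult.assoc[symmetric] left_inverse[OF c0] mult_1_left)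
  then have "((Re \<circ> G) has_integral Re (g 0)) {0..1}"
    by (rule has_integral_linear[OF _ bounded_linear_Re])
  then have hi: "((\<lambda>t. Re (g (exp (2 * of_real pi * \<i> * of_real t)))) has_integral Re (g 0)) {0..1}"
    by (simp only: o_def G_def)
  have ce: "continuous_on {0..1} (\<lambda>t::real. Re (g (exp (2 * of_real pi * \<i> * of_real t))))"
  proof -
    have "exp (2 * of_real pi * \<i> * of_real t) \<in> W" for t :: real
      using W(2) by (auto simp: norm_exp_eq_Re)
    then show ?thesis
      by (intro continuous_intros continuous_on_compose2[OF cg]) auto
  qed
  have "set_integrable lborel {0..1} (\<lambda>t::real. Re (g (exp (2 * of_real pi * \<i> * of_real t))))"
    unfolding set_integrable_def by (rule borel_integrable_compact[OF compact_Icc ce])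
  then show ?thesis
    using set_borel_integral_eq_integral(2) hi integral_unique by metis
qed

lemma mean_value_ball:
  fixes F :: "complex^'n \<Rightarrow> complex"
  assumes r: "r > 0" and U: "open U" "cball x r \<subseteq> U" and cF: "continuous_on U F"
    and hol: "\<And>v. (\<lambda>l. F (x + l *s v)) holomorphic_on {l. x + l *s v \<in> U}"
  shows "(LINT y:cball x r|lborel. Re (F y)) = Re (F x) * measure lborel (cball x r)"
proof -
  define B where "B = cball x r"
  define u where "u y = Re (F y)" for y
  define e where "e t = exp (2 * of_real pi * \<i> * of_real t)" for t :: real
  define R where "R t y = x + e t *s (y - x)" for t y
  have ne: "cmod (e t) = 1" for t
    by (simp add: e_def norm_exp_eq_Re)
  have RB: "R t y \<in> B \<longleftrightarrow> y \<in> B" for t y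
  proof -
    have "dist x (R t y) = norm (e t *s (y - x))"
      by (simp add: R_def dist_norm norm_minus_commute)
    also have "\<dots> = dist x y" by (simp only: norm_smult_vec ne mult_1_left dist_norm norm_minus_commute)
    finally show ?thesis by (simp add: B_def)
  qed
  have cu: "continuous_on U u"
    unfolding u_def using cF by (intro continuous_intros)
  have cB: "continuous_on B u"
    using cu U(2) B_def continuous_on_subset by blast
  have cR: "continuous_on S (\<lambda>p. R (fst p) (snd p))" for S
    unfolding R_def e_def by (intro continuous_intros)
  have mR: "R t \<in> borel_measurable borel" for t
    unfolding R_def e_def by (intro borel_measurable_continuous_onI continuous_intros)
  have intB: "integrable lborel (\<lambda>y. indicator B y *\<^sub>R u y)"
    using borel_integrable_compact[OF _ cB] B_def by simp
  then have mB: "(\<lambda>y. indicator B y *\<^sub>R u y) \<in> borel_measurable borel"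
    using borel_measurable_integrable by fastforce
  define I where "I = (\<integral>y. indicator B y *\<^sub>R u y \<partial>lborel)"
  have K: "(\<integral>y. indicator B y *\<^sub>R u (R t y) \<partial>lborel) = I" for t
  proof -
    have "(\<integral>y. indicator B y *\<^sub>R u (R t y) \<partial>lborel) = (\<integral>y. (\<lambda>z. indicator B z *\<^sub>R u z) (R t y) \<partial>lborel)"
      by (intro Bochner_Integration.integral_cong refl) (simp add: indicator_def RB)
    also have "\<dots> = integral\<^sup>L (distr lborel borel (R t)) (\<lambda>z. indicator B z *\<^sub>R u z)"
      using mR mB by (simp add: integral_distr)
    also have "\<dots> = I"
      unfolding I_def R_def using rotc_lborel[OF ne[of t], of x] by simp
    finally show ?thesis .
  qed
  define f where "f t y = indicator {0..1::real} t * (indicator B y * u (R t y))" for t y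
  have cK: "continuous_on ({0..1} \<times> B) (\<lambda>p. u (R (fst p) (snd p)))"
  proof (rule continuous_on_compose2[OF cu cR])
    show "(\<lambda>p. R (fst p) (snd p)) ` ({0..1} \<times> B) \<subseteq> U"
      using RB U(2) B_def by auto
  qed
  have "integrable lborel (\<lambda>p. indicator ({0..1} \<times> B) p *\<^sub>R u (R (fst p) (snd p)))"
    by (rule borel_integrable_compact[OF _ cK]) (simp add: B_def compact_Times)
  then have intP: "integrable (lborel \<Otimes>\<^sub>M lborel) (case_prod f)"
    unfolding lborel_prod by (simp add: f_def indicator_times case_prod_beta' mult.assoc)
  have Fub: "(\<integral>y. (\<integral>t. f t y \<partial>lborel) \<partial>lborel) = (\<integral>t. (\<integral>y. f t y \<partial>lborel) \<partial>lborel)"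
    by (rule lborel_pair.Fubini_integral[OF intP])
  have rhs: "(\<integral>t. (\<integral>y. f t y \<partial>lborel) \<partial>lborel) = I"
  proof -
    have "(\<integral>y. f t y \<partial>lborel) = indicator {0..1} t * I" for t
      using K[of t] by (simp add: f_def)
    then show ?thesis by simp
  qed
  have inner: "(\<integral>t. f t y \<partial>lborel) = indicator B y * u x" for y
  proof (cases "y \<in> B")
    case False then show ?thesis by (simp add: f_def)
  next
    case True
    define g where "g l = F (x + l *s (y - x))" for l
    define W where "W = {l. x + l *s (y - x) \<in> U}"
    have oW: "open W"
    proof -
      have "W = (\<lambda>l. x + l *s (y - x)) -` U" by (auto simp: W_def)
      moreover have "continuous_on UNIV (\<lambda>l. x + l *s (y - x))"
        by (intro continuous_intros)
      ultimately show ?thesis using U(1) by (simp add: open_vimage)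
    qed
    have cW: "cball 0 1 \<subseteq> W"
    proof
      fix l :: complex assume "l \<in> cball 0 1"
      then have "cmod l \<le> 1" by simp
      have "norm (l *s (y - x)) = cmod l * norm (y - x)" by (rule norm_smult_vec)
      also have "\<dots> \<le> norm (y - x)"
        using \<open>cmod l \<le> 1\<close> by (intro mult_left_le_one_le) auto
      also have "\<dots> \<le> r" using True by (simp add: B_def dist_norm norm_minus_commute)
      finally have "x + l *s (y - x) \<in> cball x r" by (simp add: dist_norm norm_minus_commute)
      then show "l \<in> W" using U(2) by (auto simp: W_def)
    qed
    have "(LINT t:{0..1}|lborel. Re (g (exp (2 * of_real pi * \<i> * of_real t)))) = Re (g 0)"
      by (rule circle_mean[OF oW cW]) (unfold g_def W_def, rule hol)
    then have "(\<integral>t. indicator {0..1} t * u (R t y) \<partial>lborel) = u x"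
      by (simp add: set_lebesgue_integral_def g_def u_def R_def e_def)
    then show ?thesis using True by (simp add: f_def)
  qed
  have lhs: "(\<integral>y. (\<integral>t. f t y \<partial>lborel) \<partial>lborel) = u x * measure lborel B"
  proof -
    have "(\<integral>y. (\<integral>t. f t y \<partial>lborel) \<partial>lborel) = (\<integral>y. indicator B y * u x \<partial>lborel)"
      by (simp add: inner)
    also have "\<dots> = measure lborel B * u x"
      using B_def by (simp add: emeasure_lborel_cball_finite)
    finally show ?thesis by simp
  qed
  show ?thesis
    using Fub lhs rhs unfolding set_lebesgue_integral_def I_def u_def B_def by simp
qed

lemma hs_line_deriv:
  fixes f :: "complex^'n \<Rightarrow> complex"
  assumes hs: "holomorphic_several f \<Omega>" and z: "x + l *s v \<in> \<Omega>"
  shows "\<exists>D. ((\<lambda>l. f (x + l *s v)) has_field_derivative D) (at l)"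
proof -
  obtain L where L: "(f has_derivative L) (at (x + l *s v))" and cl: "\<And>c w. L (c *s w) = c * L w"
    using hs z unfolding holomorphic_several_def by blast
  have lin: "linear (\<lambda>h::complex. h *s v)"
    by (rule linearI; rule vec_eq_iff[THEN iffD2]; simp add: algebra_simps mult_scaleR_left)
  have "((\<lambda>h::complex. h *s v) has_derivative (\<lambda>h. h *s v)) (at l)"
    by (rule bounded_linear_imp_has_derivative) (use lin linear_conv_bounded_linear in blast)
  then have d1: "((\<lambda>h::complex. x + h *s v) has_derivative (\<lambda>h. h *s v)) (at l)"
    by (intro derivative_eq_intros) auto
  have "((f \<circ> (\<lambda>h. x + h *s v)) has_derivative (L \<circ> (\<lambda>h. h *s v))) (at l)"
    by (rule diff_chain_at[OF d1 L])
  moreover have "(L \<circ> (\<lambda>h. h *s v)) = (*) (L v)"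
    by (rule ext) (simp add: cl mult.commute)
  ultimately have "((\<lambda>l. f (x + l *s v)) has_field_derivative L v) (at l)"
    by (simp add: has_field_derivative_def o_def)
  then show ?thesis by blast
qed

lemma hs_line_holo:
  fixes f :: "complex^'n \<Rightarrow> complex"
  assumes hs: "holomorphic_several f \<Omega>"
  shows "(\<lambda>l. f (x + l *s v)) holomorphic_on {l. x + l *s v \<in> \<Omega>}"
  unfolding holomorphic_on_def
proof
  fix l assume "l \<in> {l. x + l *s v \<in> \<Omega>}"
  then obtain D where "((\<lambda>l. f (x + l *s v)) has_field_derivative D) (at l)"
    using hs_line_deriv[OF hs] by blast
  then show "(\<lambda>l. f (x + l *s v)) field_differentiable at l within {l. x + l *s v \<in> \<Omega>}"
    using field_differentiable_at_within field_differentiable_def by blast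
qed

lemma hs_cont:
  fixes f :: "complex^'n \<Rightarrow> complex"
  assumes hs: "holomorphic_several f \<Omega>"
  shows "continuous_on \<Omega> f"
proof (rule continuous_at_imp_continuous_on, rule ballI)
  fix z assume "z \<in> \<Omega>"
  then obtain L where "(f has_derivative L) (at z)"
    using hs unfolding holomorphic_several_def by blast
  then show "isCont f z" by (rule has_derivative_continuous)
qed

lemma real_Inf_unbounded:
  fixes X Y :: "real set"
  assumes "\<not> bdd_below X" "\<not> bdd_below Y"
  shows "Inf X = Inf Y"
proof -
  have "\<not> bdd_above (uminus ` X)" "\<not> bdd_above (uminus ` Y)"
    using assms by (simp_all add: bdd_above_uminus)
  then have nX: "\<forall>z. \<not> (\<forall>x\<in>uminus ` X. x \<le> z)" and nY: "\<forall>z. \<not> (\<forall>x\<in>uminus ` Y. x \<le> z)"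
    unfolding bdd_above_def by blast+
  have e1: "(\<lambda>z. \<forall>x\<in>uminus ` X. x \<le> z) = (\<lambda>z. False)"
  proof (rule ext)
    fix z show "(\<forall>x\<in>uminus ` X. x \<le> z) = False" using nX by blast
  qed
  have e2: "(\<lambda>z. \<forall>x\<in>uminus ` Y. x \<le> z) = (\<lambda>z. False)"
  proof (rule ext)
    fix z show "(\<forall>x\<in>uminus ` Y. x \<le> z) = False" using nY by blast
  qed
  from e1 e2 have "(\<lambda>z. \<forall>x\<in>uminus ` X. x \<le> z) = (\<lambda>z. \<forall>x\<in>uminus ` Y. x \<le> z)"
    by simp
  then show ?thesis unfolding Inf_real_def Sup_real_def by simp
qed

lemma shift_class:
  fixes D :: "'a::euclidean_space set"
  assumes s: "s \<in> perron_upper_class D \<phi>"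
  shows "(\<lambda>z. s z + K) \<in> perron_upper_class D (\<lambda>z. \<phi> z + K)"
proof -
  have cs: "continuous_on D s" and mv: "\<And>x r. r > 0 \<Longrightarrow> cball x r \<subseteq> D \<Longrightarrow>
      s x \<ge> (LINT y:cball x r|lborel. s y) / measure lborel (cball x r)"
    and bb: "bdd_below (s ` D)"
    and bd: "\<And>\<zeta> e. \<zeta> \<in> frontier D \<Longrightarrow> e > 0 \<Longrightarrow> \<exists>d>0. \<forall>z\<in>D. dist z \<zeta> < d \<longrightarrow> s z > \<phi> \<zeta> - e"
    using s unfolding perron_upper_class_def cont_superharmonic_on_def by auto
  have "cont_superharmonic_on D (\<lambda>z. s z + K)"
    unfolding cont_superharmonic_on_def
  proof (intro conjI allI impI)
    show "continuous_on D (\<lambda>z. s z + K)" using cs by (intro continuous_intros)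
    fix x :: 'a and r :: real assume r: "r > 0" and sub: "cball x r \<subseteq> D"
    define m where "m = measure lborel (cball x r)"
    have m0: "m > 0" unfolding m_def using content_cball_pos[OF r] by simp
    have si: "set_integrable lborel (cball x r) s"
      unfolding set_integrable_def
      by (rule borel_integrable_compact) (use cs sub continuous_on_subset in auto)
    have ci: "set_integrable lborel (cball x r) (\<lambda>_. K)"
      unfolding set_integrable_def
      by (rule borel_integrable_compact) (auto intro: continuous_intros)
    have "(LINT y:cball x r|lborel. s y + K) = (LINT y:cball x r|lborel. s y) + (LINT y:cball x r|lborel. K)"
      by (rule set_integral_add[OF si ci])
    also have "(LINT y:cball x r|lborel. K) = m * K"
      unfolding m_def set_lebesgue_integral_def
      using emeasure_lborel_cball_finite[of x r] by (simp add: less_top)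
    finally have "(LINT y:cball x r|lborel. s y + K) / m = (LINT y:cball x r|lborel. s y) / m + K"
      using m0 by (simp add: add_divide_distrib)
    then show "(LINT y:cball x r|lborel. s y + K) / measure lborel (cball x r) \<le> s x + K"
      using mv[OF r sub] unfolding m_def by simp
  qed
  moreover have "bdd_below ((\<lambda>z. s z + K) ` D)"
  proof -
    obtain m where "\<forall>z\<in>D. m \<le> s z" using bb unfolding bdd_below_def by auto
    then have "\<forall>v\<in>(\<lambda>z. s z + K) ` D. m + K \<le> v" by auto
    then show ?thesis unfolding bdd_below_def by blast
  qed
  moreover have "\<exists>d>0. \<forall>z\<in>D. dist z \<zeta> < d \<longrightarrow> s z + K > (\<phi> \<zeta> + K) - e"
    if hz: "\<zeta> \<in> frontier D" "e > 0" for \<zeta> e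
  proof -
    obtain d where "d > 0" "\<forall>z\<in>D. dist z \<zeta> < d \<longrightarrow> s z > \<phi> \<zeta> - e" using bd[OF hz] by blast
    then show ?thesis by (intro exI[of _ d]) auto
  qed
  ultimately show ?thesis unfolding perron_upper_class_def by blast
qed

lemma perron_le:
  fixes D :: "'a::euclidean_space set"
  assumes hm: "harmonic_measure D z0 \<omega>" and bD: "bounded D"
    and \<phi>c: "continuous_on (frontier D) \<phi>"
    and h: "h \<in> perron_upper_class D \<phi>"
  shows "(\<integral>y. \<phi> y \<partial>\<omega>) \<le> h z0 \<or> emeasure \<omega> (space \<omega>) = 0"
proof -
  have sets\<omega>: "sets \<omega> = sets (restrict_space borel (frontier D))"
    and fm: "finite_measure \<omega>"
    and rep: "\<And>\<psi>. continuous_on (frontier D) \<psi> \<Longrightarrow> (\<integral>y. \<psi> y \<partial>\<omega>) = perron_solution D \<psi> z0"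
    using hm unfolding harmonic_measure_def by auto
  define S where "S K = (\<lambda>s. s z0) ` perron_upper_class D (\<lambda>z. \<phi> z + K)" for K
  have cls0: "perron_upper_class D (\<lambda>z. \<phi> z + 0) = perron_upper_class D \<phi>" by simp
  have SK: "S K = (\<lambda>v. v + K) ` S 0" for K
  proof
    show "S K \<subseteq> (\<lambda>v. v + K) ` S 0"
    proof
      fix v assume "v \<in> S K"
      then obtain s where s: "s \<in> perron_upper_class D (\<lambda>z. \<phi> z + K)" "v = s z0"
        unfolding S_def by blast
      have "(\<lambda>z. s z + (- K)) \<in> perron_upper_class D (\<lambda>z. (\<phi> z + K) + (- K))"
        by (rule shift_class[OF s(1)])
      then have "(\<lambda>z. s z - K) \<in> perron_upper_class D (\<lambda>z. \<phi> z + 0)" by simp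
      then have "s z0 - K \<in> S 0" unfolding S_def by (rule image_eqI[rotated]) simp
      then show "v \<in> (\<lambda>v. v + K) ` S 0" using s(2) by (intro image_eqI[of v _ "s z0 - K"]) auto
    qed
  next
    show "(\<lambda>v. v + K) ` S 0 \<subseteq> S K"
    proof
      fix v assume "v \<in> (\<lambda>v. v + K) ` S 0"
      then obtain s where s: "s \<in> perron_upper_class D (\<lambda>z. \<phi> z + 0)" "v = s z0 + K"
        unfolding S_def by blast
      have "(\<lambda>z. s z + K) \<in> perron_upper_class D (\<lambda>z. (\<phi> z + 0) + K)"
        by (rule shift_class[OF s(1)])
      then have "(\<lambda>z. s z + K) \<in> perron_upper_class D (\<lambda>z. \<phi> z + K)" by simp
      then show "v \<in> S K" unfolding S_def s(2) by (rule image_eqI[rotated]) simp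
    qed
  qed
  have PS: "perron_solution D (\<lambda>z. \<phi> z + K) z0 = Inf (S K)" for K
    unfolding perron_solution_def S_def by simp
  show ?thesis
  proof (cases "bdd_below (S 0)")
    case True
    have "h z0 \<in> S 0" unfolding S_def using h by simp
    then have "Inf (S 0) \<le> h z0" using True by (rule cInf_lower)
    moreover have "(\<integral>y. \<phi> y \<partial>\<omega>) = Inf (S 0)"
      using rep[OF \<phi>c] PS[of 0] by simp
    ultimately show ?thesis by simp
  next
    case False
    have nb: "\<not> bdd_below (S K)" for K
    proof
      assume "bdd_below (S K)"
      then obtain m where "\<forall>v\<in>S K. m \<le> v" unfolding bdd_below_def by blast
      then have "\<forall>v\<in>(\<lambda>v. v + K) ` S 0. m \<le> v" unfolding SK[of K] .
      then have "\<forall>v\<in>S 0. m - K \<le> v" by auto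
      then show False using False unfolding bdd_below_def by blast
    qed
    have sp: "space \<omega> = frontier D"
      using sets_eq_imp_space_eq[OF sets\<omega>] by simp
    have cpt: "compact (frontier D)"
      using bD by (simp add: compact_frontier_bounded)
    obtain B where B: "\<forall>y\<in>frontier D. norm (\<phi> y) \<le> B"
      using compact_imp_bounded[OF compact_continuous_image[OF \<phi>c cpt]]
      unfolding bounded_iff by auto
    have m\<phi>: "\<phi> \<in> borel_measurable \<omega>"
      unfolding measurable_cong_sets[OF sets\<omega> refl] by (rule borel_measurable_continuous_on_restrict[OF \<phi>c])
    interpret finite_measure \<omega> by (rule fm)
    have i\<phi>: "integrable \<omega> \<phi>"
      by (rule integrable_const_bound[where B=B]) (use B sp m\<phi> in auto)
    have c1: "continuous_on (frontier D) (\<lambda>z. \<phi> z + 1)" using \<phi>c by (intro continuous_intros)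
    have "(\<integral>y. \<phi> y + 1 \<partial>\<omega>) = Inf (S 1)" using rep[OF c1] PS[of 1] by simp
    also have "\<dots> = Inf (S 0)" by (rule real_Inf_unbounded[OF nb nb])
    also have "\<dots> = (\<integral>y. \<phi> y \<partial>\<omega>)" using rep[OF \<phi>c] PS[of 0] by simp
    finally have "(\<integral>y. \<phi> y + 1 \<partial>\<omega>) = (\<integral>y. \<phi> y \<partial>\<omega>)" .
    moreover have "(\<integral>y. \<phi> y + 1 \<partial>\<omega>) = (\<integral>y. \<phi> y \<partial>\<omega>) + measure \<omega> (space \<omega>)"
      using i\<phi> by simp
    ultimately have "measure \<omega> (space \<omega>) = 0" by simp
    then show ?thesis by (simp add: emeasure_eq_measure)
  qed
qed

lemma sin_lower:
  fixes s :: real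
  assumes "0 \<le> s" "s \<le> 1/2"
  shows "s / 2 \<le> sin s"
proof (cases "s = 0")
  case True then show ?thesis by simp
next
  case False
  then have "0 < s" using assms by simp
  then obtain z where z: "0 < z" "z < s" "sin s - sin 0 = (s - 0) * cos z"
    using MVT2[of 0 s sin cos] by (auto intro: DERIV_sin)
  have "pi / 3 \<le> pi" by simp
  moreover have "z \<le> pi / 3" using z(2) assms(2) pi_gt3 by linarith
  ultimately have "cos (pi / 3) \<le> cos z"
    using z(1) by (intro cos_monotone_0_pi_le) auto
  then have "1/2 \<le> cos z" by (simp add: cos_60)
  then have "s * (1/2) \<le> s * cos z" using \<open>0 < s\<close> by (intro mult_left_mono) auto
  then show ?thesis using z(3) by simp
qed

lemma exists_dyadic:
  fixes Y :: real
  assumes "0 \<le> Y"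
  shows "\<exists>k::nat. 2 ^ k \<le> 1 + Y \<and> 1 + Y < 2 ^ Suc k"
proof -
  obtain n0 where n0: "1 + Y < (2::real) ^ n0"
    using real_arch_pow[of 2 "1 + Y"] by auto
  have "(2::real) ^ n0 \<le> 2 ^ Suc n0" by simp
  then have n: "1 + Y < (2::real) ^ Suc n0" using n0 by linarith
  define k where "k = (LEAST n. 1 + Y < (2::real) ^ Suc n)"
  have k2: "1 + Y < 2 ^ Suc k" unfolding k_def by (rule LeastI[of _ n0]) (rule n)
  have k1: "2 ^ k \<le> 1 + Y"
  proof (cases k)
    case 0 then show ?thesis using assms by simp
  next
    case (Suc j)
    then have "\<not> (1 + Y < (2::real) ^ Suc j)"
      using not_less_Least[of j "\<lambda>n. 1 + Y < (2::real) ^ Suc n"] unfolding k_def[symmetric] by simp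
    then show ?thesis using Suc by simp
  qed
  show ?thesis using k1 k2 by blast
qed

lemma key_ineq:
  fixes w :: complex and \<alpha> :: real
  assumes x1: "\<bar>Re w\<bar> \<le> 1" and a1: "\<alpha> > 1"
  shows "\<exists>k::nat. exp (pi / 2 * cmod w) / (1 + cmod w) powr \<alpha>
     \<le> (4 * exp (1 + pi / 2) * 2 powr \<alpha>) * (((1/2)^Suc k) powr (\<alpha> - 1)
         * Re (cos (complex_of_real (pi / 2 - (1/2)^Suc k) * w)))"
proof -
  define x where "x = Re w"
  define y where "y = Im w"
  define Y where "Y = \<bar>y\<bar>"
  have Y0: "0 \<le> Y" by (simp add: Y_def)
  obtain k where k1: "2 ^ k \<le> 1 + Y" and k2: "1 + Y < 2 ^ Suc k"
    using exists_dyadic[OF Y0] by blast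
  define s :: real where "s = (1/2)^Suc k"
  define c where "c = pi / 2 - s"
  have s0: "0 < s" by (simp add: s_def)
  have shalf: "s \<le> 1/2" by (simp add: s_def power_le_one)
  have sY1: "s * (1 + Y) < 1"
  proof -
    have "s * 2 ^ Suc k = 1" by (simp add: s_def power_one_over[symmetric] power_mult_distrib[symmetric])
    then show ?thesis using k2 s0 by (metis mult_strict_left_mono)
  qed
  have sY2: "1 \<le> s * (2 * (1 + Y))"
  proof -
    have "s * (2 * 2 ^ k) = 1" by (simp add: s_def power_one_over[symmetric] power_mult_distrib[symmetric])
    moreover have "s * (2 * 2 ^ k) \<le> s * (2 * (1 + Y))" using k1 s0 by simp
    ultimately show ?thesis by simp
  qed
  have sY: "s * Y \<le> 1" using sY1 s0 by (simp add: algebra_simps)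
  have c0: "0 < c" using shalf pi_gt3 by (simp add: c_def)
  have cpi: "c \<le> pi" unfolding c_def using s0 pi_gt_zero by linarith
  have Rcos: "Re (cos (complex_of_real c * w)) = cos (c * x) * (exp (c * y) + exp (- (c * y))) / 2"
    by (simp add: Re_cos x_def y_def)
  have cosx: "sin s \<le> cos (c * x)"
  proof -
    have "\<bar>c * x\<bar> \<le> c" using x1 c0 by (simp add: abs_mult x_def mult_left_le_one_le)
    then have "cos c \<le> cos \<bar>c * x\<bar>" using cpi by (intro cos_monotone_0_pi_le) auto
    moreover have "cos c = sin s" by (simp add: c_def cos_sin_eq)
    ultimately show ?thesis by simp
  qed
  have sins: "s / 2 \<le> sin s" using sin_lower s0 shalf by simp
  have expy: "exp (c * Y) \<le> exp (c * y) + exp (- (c * y))"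
    using c0 by (cases "y \<ge> 0") (auto simp: Y_def add_increasing add_increasing2)
  have EY: "exp (pi / 2 * Y) * exp (- 1) \<le> exp (c * Y)"
  proof -
    have "pi / 2 * Y - 1 \<le> c * Y" using sY by (simp add: c_def algebra_simps)
    then show ?thesis by (simp add: exp_add[symmetric])
  qed
  define E where "E = exp (pi / 2 * Y)"
  have E0: "0 < E" by (simp add: E_def)
  have Rlow: "s * (E * exp (- 1)) / 4 \<le> Re (cos (complex_of_real c * w))"
  proof -
    have "s / 2 * (exp (c * Y) / 2) \<le> cos (c * x) * ((exp (c * y) + exp (- (c * y))) / 2)"
      using sins cosx expy s0 by (intro mult_mono) auto
    moreover have "s * (E * exp (- 1)) / 4 \<le> s / 2 * (exp (c * Y) / 2)"
      using EY s0 unfolding E_def by (simp add: field_simps)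
    ultimately show ?thesis using Rcos by simp
  qed
  define P where "P = (1 + Y) powr \<alpha>"
  have P0: "0 < P" using Y0 by (simp add: P_def)
  have spow: "1 \<le> s powr \<alpha> * (2 powr \<alpha> * P)"
  proof -
    have "1 \<le> (s * (2 * (1 + Y))) powr \<alpha>"
      using sY2 a1 by (intro ge_one_powr_ge_zero) auto
    also have "\<dots> = s powr \<alpha> * (2 * (1 + Y)) powr \<alpha>"
      by (rule powr_mult; use s0 Y0 in auto)
    also have "(2 * (1 + Y)) powr \<alpha> = 2 powr \<alpha> * P"
      unfolding P_def by (rule powr_mult; use Y0 in auto)
    finally show ?thesis .
  qed
  have pw: "s powr (\<alpha> - 1) * s = s powr \<alpha>"
  proof -
    have "s powr \<alpha> = s powr ((\<alpha> - 1) + 1)" by simp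
    also have "\<dots> = s powr (\<alpha> - 1) * s powr 1" by (rule powr_add)
    also have "\<dots> = s powr (\<alpha> - 1) * s" using s0 by simp
    finally show ?thesis by simp
  qed
  define A where "A = 4 * exp (1 + pi / 2) * 2 powr \<alpha>"
  have rhs: "exp (pi / 2) * E / P \<le> A * (s powr (\<alpha> - 1) * Re (cos (complex_of_real c * w)))"
  proof -
    have ea: "exp (1 + pi / 2) = exp 1 * exp (pi / 2)" by (rule exp_add)
    have em: "exp (- 1) * exp 1 = (1::real)" by (simp add: exp_add[symmetric])
    have alg: "4 * (a * b) * t * (p * (s' * (E' * m) / 4)) = (m * a) * (b * E' * ((p * s') * t))"
      for a b t p s' E' m :: real by (simp add: algebra_simps)
    have r3: "A * (s powr (\<alpha> - 1) * (s * (E * exp (- 1)) / 4)) = exp (pi / 2) * E * (s powr \<alpha> * 2 powr \<alpha>)"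
      by (simp only: A_def ea alg em pw mult_1_left)
    have r1: "1 / P \<le> s powr \<alpha> * 2 powr \<alpha>"
      using spow P0 by (simp only: pos_divide_le_eq mult.assoc)
    have r2: "exp (pi / 2) * E / P \<le> exp (pi / 2) * E * (s powr \<alpha> * 2 powr \<alpha>)"
    proof -
      have "exp (pi / 2) * E * (1 / P) \<le> exp (pi / 2) * E * (s powr \<alpha> * 2 powr \<alpha>)"
        using r1 E0 by (intro mult_left_mono) auto
      then show ?thesis by simp
    qed
    have A0: "0 \<le> A" by (simp add: A_def)
    have sp0: "0 \<le> s powr (\<alpha> - 1)" by simp
    have r4: "A * (s powr (\<alpha> - 1) * (s * (E * exp (- 1)) / 4)) \<le> A * (s powr (\<alpha> - 1) * Re (cos (complex_of_real c * w)))"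
      by (intro mult_left_mono Rlow A0 sp0)
    show ?thesis using r2 r3 r4 by linarith
  qed
  have lhs: "exp (pi / 2 * cmod w) / (1 + cmod w) powr \<alpha> \<le> exp (pi / 2) * E / P"
  proof -
    have "cmod w \<le> 1 + Y" using cmod_le[of w] x1 by (simp add: Y_def y_def)
    then have "pi / 2 * cmod w \<le> pi / 2 * (1 + Y)" by (intro mult_left_mono) auto
    then have "exp (pi / 2 * cmod w) \<le> exp (pi / 2 * (1 + Y))" by simp
    also have "\<dots> = exp (pi / 2) * E" by (simp add: E_def exp_add[symmetric] distrib_left)
    finally have "exp (pi / 2 * cmod w) \<le> exp (pi / 2) * E" .
    moreover have "P \<le> (1 + cmod w) powr \<alpha>"
      unfolding P_def using abs_Im_le_cmod[of w] Y0 a1 by (intro powr_mono2) (auto simp: Y_def y_def)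
    ultimately show ?thesis using P0 E0 by (intro frac_le) auto
  qed
  show ?thesis
    using order_trans[OF lhs rhs] unfolding A_def c_def s_def by blast
qed

lemma hm_integrable:
  fixes D :: "'a::euclidean_space set" and \<phi> :: "'a \<Rightarrow> real"
  assumes hm: "harmonic_measure D z0 \<omega>" and bD: "bounded D"
    and \<phi>c: "continuous_on (frontier D) \<phi>"
  shows "integrable \<omega> \<phi>" and "space \<omega> = frontier D" and "\<phi> \<in> borel_measurable \<omega>"
    and "finite_measure \<omega>"
proof -
  have sets\<omega>: "sets \<omega> = sets (restrict_space borel (frontier D))"
    and fm: "finite_measure \<omega>"
    using hm unfolding harmonic_measure_def by auto
  show sp: "space \<omega> = frontier D"
    using sets_eq_imp_space_eq[OF sets\<omega>] by simp
  have cpt: "compact (frontier D)"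
    using bD by (simp add: compact_frontier_bounded)
  obtain B where B: "\<forall>y\<in>frontier D. norm (\<phi> y) \<le> B"
    using compact_imp_bounded[OF compact_continuous_image[OF \<phi>c cpt]]
    unfolding bounded_iff by auto
  show m\<phi>: "\<phi> \<in> borel_measurable \<omega>"
    unfolding measurable_cong_sets[OF sets\<omega> refl] by (rule borel_measurable_continuous_on_restrict[OF \<phi>c])
  interpret finite_measure \<omega> by (rule fm)
  show "integrable \<omega> \<phi>"
    by (rule integrable_const_bound[where B=B]) (use B sp m\<phi> in auto)
  show "finite_measure \<omega>" by (rule fm)
qed

lemma q_facts:
  fixes \<alpha> :: real
  assumes "\<alpha> > 1"
  shows "((1/2::real)^Suc k) powr (\<alpha> - 1) = ((1/2::real) powr (\<alpha> - 1)) ^ Suc k"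
    and "0 < (1/2::real) powr (\<alpha> - 1)" and "(1/2::real) powr (\<alpha> - 1) < 1"
proof -
  have "((1/2::real)^Suc k) = (1/2) powr real (Suc k)"
    by (rule powr_realpow[symmetric]) simp
  then have "((1/2::real)^Suc k) powr (\<alpha> - 1) = (1/2) powr (real (Suc k) * (\<alpha> - 1))"
    by (simp add: powr_powr)
  also have "\<dots> = ((1/2::real) powr (\<alpha> - 1)) ^ Suc k"
    by (rule powr_power[symmetric]) simp
  finally show "((1/2::real)^Suc k) powr (\<alpha> - 1) = ((1/2::real) powr (\<alpha> - 1)) ^ Suc k" .
  show "0 < (1/2::real) powr (\<alpha> - 1)" by simp
  have "(1/2::real) powr (\<alpha> - 1) = 1 / 2 powr (\<alpha> - 1)"
    by (simp add: powr_divide)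
  also have "\<dots> = 2 powr (- (\<alpha> - 1))"
    by (rule powr_minus_divide[symmetric])
  also have "\<dots> < 1" using assms by (intro powr_less_one) auto
  finally show "(1/2::real) powr (\<alpha> - 1) < 1" .
qed

theorem theorem1p5:
  fixes \<Omega> :: "(complex^'n) set" and f :: "complex^'n \<Rightarrow> complex"
    and z0 :: "complex^'n" and \<alpha> :: real
  assumes "domain \<Omega>"
    and "holomorphic_several f \<Omega>"
    and "\<forall>z\<in>\<Omega>. \<bar>Re (f z)\<bar> \<le> 1"
    and "z0 \<in> \<Omega>" and "Im (f z0) = 0"
    and "\<alpha> > 1"
  shows "\<exists>C>0. \<forall>\<Omega>t \<omega> t. exhaustion \<Omega>t \<Omega> \<longrightarrow> z0 \<in> \<Omega>t t \<longrightarrow>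
            harmonic_measure (\<Omega>t t) z0 \<omega> \<longrightarrow>
            (\<integral>\<^sup>+ z. ennreal (exp (pi / 2 * cmod (f z)) / (1 + cmod (f z)) powr \<alpha>) \<partial>\<omega>)
              \<le> ennreal C"
proof -
  note dom = assms(1) and hs = assms(2) and re1 = assms(3) and z0\<Omega> = assms(4)
    and imz = assms(5) and a1 = assms(6)
  have op\<Omega>: "open \<Omega>" using dom by (simp add: domain_def)
  have cf: "continuous_on \<Omega> f" by (rule hs_cont[OF hs])
  define sk where "sk k = ((1::real)/2)^Suc k" for k :: nat
  define ck where "ck k = pi / 2 - sk k" for k
  define A where "A = 4 * exp (1 + pi / 2) * 2 powr \<alpha>"
  define q where "q = (1/2::real) powr (\<alpha> - 1)"
  have ak: "sk k powr (\<alpha> - 1) = q ^ Suc k" for k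
    unfolding sk_def q_def by (rule q_facts(1)[OF a1])
  have q0: "0 < q" and q1: "q < 1" unfolding q_def using q_facts(2,3)[OF a1] by auto
  have A0: "0 < A" by (simp add: A_def)
  have sumq: "summable (\<lambda>k. A * q ^ Suc k)"
  proof -
    have "summable (\<lambda>k. (A * q) * q ^ k)" using q0 q1 by (intro summable_mult summable_geometric) auto
    then show ?thesis by (simp add: power_Suc mult.assoc)
  qed
  define C where "C = (\<Sum>k. A * q ^ Suc k)"
  have C0: "0 < C"
  proof -
    have "(\<Sum>k\<in>{0}. A * q ^ Suc k) \<le> C"
      unfolding C_def by (rule sum_le_suminf[OF sumq]) (use A0 q0 in auto)
    moreover have "0 < A * q ^ Suc 0" using A0 q0 by simp
    ultimately show ?thesis by simp
  qed
  define F where "F k z = cos (complex_of_real (ck k) * f z)" for k z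
  define h where "h k z = Re (F k z)" for k z
  have sk0: "0 < sk k" and sk1: "sk k \<le> 1/2" for k
    by (simp_all add: sk_def power_le_one)
  have ck0: "0 \<le> ck k" and ck1: "ck k \<le> pi / 2" for k
    using sk0[of k] sk1[of k] pi_gt3 by (simp_all add: ck_def)
  have hnn: "0 \<le> h k z" if "z \<in> \<Omega>" for k z
  proof -
    have r: "\<bar>Re (f z)\<bar> \<le> 1" using re1 that by blast
    have "\<bar>ck k * Re (f z)\<bar> = ck k * \<bar>Re (f z)\<bar>" using ck0[of k] by (simp add: abs_mult)
    also have "\<dots> \<le> ck k * 1" using r ck0[of k] by (rule mult_left_mono)
    finally have "\<bar>ck k * Re (f z)\<bar> \<le> ck k * 1" .
    then have "0 \<le> cos (ck k * Re (f z))"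
      using ck1[of k] by (intro cos_ge_zero) auto
    then show ?thesis
      by (simp add: h_def F_def Re_cos add_pos_pos)
  qed
  have cF: "continuous_on \<Omega> (F k)" for k
    unfolding F_def using cf by (intro continuous_intros)
  have ch: "continuous_on \<Omega> (h k)" for k
    unfolding h_def using cF by (intro continuous_intros)
  have holF: "(\<lambda>l. F k (x + l *s v)) holomorphic_on {l. x + l *s v \<in> \<Omega>}" for k x v
    unfolding F_def using hs_line_holo[OF hs, of x v] by (intro holomorphic_intros)
  have hz0: "h k z0 \<le> 1" for k
  proof -
    have "f z0 = complex_of_real (Re (f z0))" using imz by (simp add: complex_eq_iff)
    then have "h k z0 = cos (ck k * Re (f z0))"
      unfolding h_def F_def by (metis Re_complex_of_real cos_of_real of_real_mult)
    then show ?thesis by simp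
  qed
  have main: "(\<integral>\<^sup>+ z. ennreal (exp (pi / 2 * cmod (f z)) / (1 + cmod (f z)) powr \<alpha>) \<partial>\<omega>) \<le> ennreal C"
    if ex: "exhaustion \<Omega>t \<Omega>" and z0t: "z0 \<in> \<Omega>t t" and hm: "harmonic_measure (\<Omega>t t) z0 \<omega>" for \<Omega>t \<omega> t
  proof -
    define D where "D = \<Omega>t t"
    have rc: "rel_compact_subdomain D \<Omega>" using ex unfolding exhaustion_def D_def by blast
    then have domD: "domain D" and cpD: "compact (closure D)" and clD: "closure D \<subseteq> \<Omega>"
      unfolding rel_compact_subdomain_def by auto
    have bD: "bounded D" using cpD compact_imp_bounded bounded_subset closure_subset by blast
    have D\<Omega>: "D \<subseteq> \<Omega>" using clD closure_subset by blast
    have fr\<Omega>: "frontier D \<subseteq> \<Omega>" using clD by (auto simp: frontier_def)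
    have hmD: "harmonic_measure D z0 \<omega>" using hm by (simp add: D_def)
    have hcf: "continuous_on (frontier D) (h k)" for k using ch fr\<Omega> continuous_on_subset by blast
    note hmi = hm_integrable[OF hmD bD hcf]
    have sp: "space \<omega> = frontier D" using hmi(2) .
    have hclass: "h k \<in> perron_upper_class D (h k)" for k
    proof -
      have "cont_superharmonic_on D (h k)"
        unfolding cont_superharmonic_on_def
      proof (intro conjI allI impI)
        show "continuous_on D (h k)" using ch D\<Omega> continuous_on_subset by blast
        fix x r assume r: "r > (0::real)" and sub: "cball x r \<subseteq> D"
        have "(LINT y:cball x r|lborel. h k y) = h k x * measure lborel (cball x r)"
          unfolding h_def
          by (rule mean_value_ball[OF r op\<Omega> _ cF holF]) (use sub D\<Omega> in auto)
        moreover have "x \<in> cball x r" using r by simp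
        then have "0 \<le> h k x" using sub D\<Omega> by (intro hnn) blast
        ultimately show "(LINT y:cball x r|lborel. h k y) / measure lborel (cball x r) \<le> h k x"
          by (cases "measure lborel (cball x r) = 0") auto
      qed
      moreover have "bdd_below (h k ` D)"
        using hnn D\<Omega> unfolding bdd_below_def by (metis image_iff subsetD)
      moreover have "\<exists>d>0. \<forall>z\<in>D. dist z \<zeta> < d \<longrightarrow> h k z > h k \<zeta> - e"
        if z: "\<zeta> \<in> frontier D" and e: "e > 0" for \<zeta> e
      proof -
        have "isCont (h k) \<zeta>"
          using ch op\<Omega> fr\<Omega> z continuous_on_eq_continuous_at by blast
        then obtain d where "d > 0" "\<forall>z. dist z \<zeta> < d \<longrightarrow> dist (h k z) (h k \<zeta>) < e"
          using e unfolding continuous_at_eps_delta by blast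
        then show ?thesis by (intro exI[of _ d]) (auto simp: dist_real_def)
      qed
      ultimately show ?thesis unfolding perron_upper_class_def by blast
    qed
    have pl: "(\<integral>y. h k y \<partial>\<omega>) \<le> h k z0 \<or> emeasure \<omega> (space \<omega>) = 0" for k
      by (rule perron_le[OF hmD bD hcf hclass])
    show ?thesis
    proof (cases "emeasure \<omega> (space \<omega>) = 0")
      case True
      have "space \<omega> \<in> null_sets \<omega>" using True by (intro null_setsI) auto
      then have "AE z in \<omega>. ennreal (exp (pi / 2 * cmod (f z)) / (1 + cmod (f z)) powr \<alpha>) = 0"
        by (rule AE_I') auto
      then have "(\<integral>\<^sup>+ z. ennreal (exp (pi / 2 * cmod (f z)) / (1 + cmod (f z)) powr \<alpha>) \<partial>\<omega>) = (\<integral>\<^sup>+ z. 0 \<partial>\<omega>)"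
        by (rule nn_integral_cong_AE)
      then show ?thesis by simp
    next
      case False
      then have int1: "(\<integral>y. h k y \<partial>\<omega>) \<le> 1" for k using pl[of k] hz0[of k] by auto
      define g where "g k z = ennreal (A * (q ^ Suc k * h k z))" for k z
      have mg: "g k \<in> borel_measurable \<omega>" for k
        unfolding g_def using hmi(3) by measurable
      have pw: "ennreal (exp (pi / 2 * cmod (f z)) / (1 + cmod (f z)) powr \<alpha>) \<le> (\<Sum>k. g k z)"
        if "z \<in> space \<omega>" for z
      proof -
        have z\<Omega>: "z \<in> \<Omega>" using that sp fr\<Omega> by auto
        obtain k where k: "exp (pi / 2 * cmod (f z)) / (1 + cmod (f z)) powr \<alpha>
           \<le> A * (sk k powr (\<alpha> - 1) * h k z)"
          using key_ineq[OF re1[rule_format, OF z\<Omega>] a1]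
          unfolding A_def sk_def h_def F_def ck_def by blast
        then have "ennreal (exp (pi / 2 * cmod (f z)) / (1 + cmod (f z)) powr \<alpha>) \<le> g k z"
          unfolding g_def ak by (rule ennreal_leI)
        also have "g k z \<le> (\<Sum>k. g k z)"
          using sum_le_suminf[OF summableI, of "{k}" "\<lambda>k. g k z"] by simp
        finally show ?thesis .
      qed
      have "(\<integral>\<^sup>+ z. ennreal (exp (pi / 2 * cmod (f z)) / (1 + cmod (f z)) powr \<alpha>) \<partial>\<omega>)
          \<le> (\<integral>\<^sup>+ z. (\<Sum>k. g k z) \<partial>\<omega>)"
        by (rule nn_integral_mono) (rule pw)
      also have "\<dots> = (\<Sum>k. integral\<^sup>N \<omega> (g k))"
        by (rule nn_integral_suminf[OF mg])
      also have "\<dots> \<le> (\<Sum>k. ennreal (A * q ^ Suc k))"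
      proof (rule suminf_le[OF _ summableI summableI])
        fix k
        have ih: "integrable \<omega> (\<lambda>z. A * (q ^ Suc k * h k z))"
          using hmi(1)[of k] by simp
        have "integral\<^sup>N \<omega> (g k) = ennreal (\<integral>z. A * (q ^ Suc k * h k z) \<partial>\<omega>)"
          unfolding g_def
        proof (rule nn_integral_eq_integral[OF ih])
          show "AE z in \<omega>. 0 \<le> A * (q ^ Suc k * h k z)"
            using hnn sp fr\<Omega> A0 q0 by (intro AE_I2) auto
        qed
        also have "(\<integral>z. A * (q ^ Suc k * h k z) \<partial>\<omega>) = A * q ^ Suc k * (\<integral>z. h k z \<partial>\<omega>)"
          by simp
        also have "\<dots> \<le> A * q ^ Suc k"
          using int1[of k] A0 q0 by (simp add: mult_left_le)
        finally show "integral\<^sup>N \<omega> (g k) \<le> ennreal (A * q ^ Suc k)"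
          by (simp add: ennreal_leI)
      qed
      also have "\<dots> = ennreal C"
        unfolding C_def by (rule suminf_ennreal2) (use A0 q0 sumq in auto)
      finally show ?thesis .
    qed
  qed
  show ?thesis
    using C0 main by blast
qed

end
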